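(* Fix $L\ge 2$ and $d\ge1$. For $l=1,\dots,L$ let $\mathcal X_l=\{\mathbf x^{[l]}_1,\dots,\mathbf x^{[l]}_{n_l}\}\subset\mathbb R^d$ be nested designs, $\mathcal X_L\subseteq\cdots\subseteq\mathcal X_1$, with $\mathbf x^{[l]}_i=\mathbf x^{[l-1]}_i$ for $i=1,\dots,n_l$, and let $\mathbf y_l=(y^{[l]}_1,\dots,y^{[l]}_{n_l})^T$ be observed outputs. Let $\alpha_l\in\mathbb R$, $\tau_l^2>0$, lengthscales $\theta_{lj}>0$ ($j=1,\dots,d$) and $\theta_{ly}>0$ ($l\ge2$). Define the kernels $K_1(\mathbf x,\mathbf x')=\prod_{j=1}^d\exp(-(x_j-x_j')^2/\theta_{1j})$ and, for $l\ge2$ and $\mathbf z=(\mathbf x,y),\mathbf z'=(\mathbf x',y')\in\mathbb R^{d+1}$, $K_l(\mathbf z,\mathbf z')=\exp(-(y-y')^2/\theta_{ly})\prod_{j=1}^d\exp(-(x_j-x_j')^2/\theta_{lj})$. Let $\mathbf K_1$ be the $n_1\times n_1$ matrix $(K_1(\mathbf x^{[1]}_i,\mathbf x^{[1]}_k))_{i,k}$ and, for $l\ge2$, $\mathbf K_l$ the $n_l\times n_l$ matrix $(K_l((\mathbf x^{[l]}_i,y^{[l-1]}_i),(\mathbf x^{[l]}_k,y^{[l-1]}_k)))_{i,k}$, all assumed invertible; let $r_i=(\mathbf K_l^{-1}(\mathbf y_l-\alpha_l\mathbf 1_{n_l}))_i$ (dependence on $l$ suppressed). For $l\ge2$ and $\mathbf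 x\in\mathbb R^d$, $u\in\mathbb R$, let $\mathbf k_l(\mathbf x,u)$ be the vector with entries $K_l((\mathbf x,u),(\mathbf x^{[l]}_i,y^{[l-1]}_i))$, and $\mu_l(\mathbf x,u)=\alpha_l+\mathbf k_l(\mathbf x,u)^T\mathbf K_l^{-1}(\mathbf y_l-\alpha_l\mathbf 1_{n_l})$, $\sigma_l^2(\mathbf x,u)=\tau_l^2(1-\mathbf k_l(\mathbf x,u)^T\mathbf K_l^{-1}\mathbf k_l(\mathbf x,u))$. Define $\mu_1^*(\mathbf x)=\alpha_1+\mathbf k_1(\mathbf x)^T\mathbf K_1^{-1}(\mathbf y_1-\alpha_1\mathbf 1_{n_1})$ and $\sigma_1^{*2}(\mathbf x)=\tau_1^2(1-\mathbf k_1(\mathbf x)^T\mathbf K_1^{-1}\mathbf k_1(\mathbf x))$, where $\mathbf k_1(\mathbf x)$ has entries $K_1(\mathbf x,\mathbf x^{[1]}_i)$. Fix $l\ge2$ and $\mathbf x$. Suppose that, conditionally on the data, $f_{l-1}(\mathbf x)\sim\mathcal N(\mu^*_{l-1}(\mathbf x),\sigma^{*2}_{l-1}(\mathbf x))$, and that conditionally on $f_{l-1}(\mathbf x)$ and the data, $f_l(\mathbf x)\sim\mathcal N(\mu_l(\mathbf x,f_{l-1}(\mathbf x)),\sigma_l^2(\mathbf x,f_{l-1}(\mathbf x)))$. Then the conditional mean $\mu_l^*(\mathbf x)$ and variance $\sigma^{*2}_l(\mathbf x)$ of $f_l(\mathbf x)$ given the data are $$\mu^*_l(\mathbf x)=\alpha_l+\sum_{i=1}^{n_l}r_i\prod_{j=1}^d\exp\Big(-\frac{(x_j-x^{[l]}_{ij})^2}{\theta_{lj}}\Big)\frac{1}{\sqrt{1+2\sigma^{*2}_{l-1}(\mathbf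 x)/\theta_{ly}}}\exp\Big(-\frac{(y^{[l-1]}_i-\mu^*_{l-1}(\mathbf x))^2}{\theta_{ly}+2\sigma^{*2}_{l-1}(\mathbf x)}\Big),$$ $$\sigma^{*2}_l(\mathbf x)=\tau_l^2-(\mu^*_l(\mathbf x)-\alpha_l)^2+\sum_{i,k=1}^{n_l}\zeta_{ik}\big(r_ir_k-\tau_l^2(\mathbf K_l^{-1})_{ik}\big)\prod_{j=1}^d\exp\Big(-\frac{(x_j-x^{[l]}_{ij})^2+(x_j-x^{[l]}_{kj})^2}{\theta_{lj}}\Big),$$ where $$\zeta_{ik}=\frac{1}{\sqrt{1+4\sigma^{*2}_{l-1}(\mathbf x)/\theta_{ly}}}\exp\Big(-\frac{(\tfrac{y^{[l-1]}_i+y^{[l-1]}_k}{2}-\mu^*_{l-1}(\mathbf x))^2}{\theta_{ly}/2+2\sigma^{*2}_{l-1}(\mathbf x)}-\frac{(y^{[l-1]}_i-y^{[l-1]}_k)^2}{2\theta_{ly}}\Big).$$ In particular these formulas define $\mu^*_l,\sigma^{*2}_l$ recursively for all $l=2,\dots,L$ starting from $\mu_1^*,\sigma_1^{*2}$.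
   Context: This is the Recursive Non-Additive (RNA) multi-fidelity emulator: $f_1(\mathbf x)=W_1(\mathbf x)$, $f_l(\mathbf x)=W_l(\mathbf x,f_{l-1}(\mathbf x))$ for $l\ge2$, with $W_l$ independent Gaussian processes with constant mean $\alpha_l$ and covariance $\tau_l^2K_l$. Here $x^{[l]}_{ij}$ denotes the $j$-th coordinate of $\mathbf x^{[l]}_i$, and $\mathbf 1_{n}$ the all-ones vector of length $n$. The "data" means $\mathbf y_1,\dots,\mathbf y_l$. *)

theory Defs
  imports "HOL-Probability.Probability"
begin

text \<open>Univariate Gaussian law N(m, v) as a measure on the reals; a zero
  variance gives the degenerate (Dirac) law at m.\<close>
definition gauss :: "real \<Rightarrow> real \<Rightarrow> real measure" where
  "gauss m v = (if v > 0 then density lborel (normal_density m (sqrt v)) else return borel m)"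

definition sqexp :: "real^'d \<Rightarrow> real^'d \<Rightarrow> real^'d \<Rightarrow> real" where
  "sqexp theta x x' = (\<Prod>j\<in>UNIV. exp (- ((x$j) - (x'$j))\<^sup>2 / theta$j))"

definition Kl :: "real^'d \<Rightarrow> real \<Rightarrow> (real^'d) \<times> real \<Rightarrow> (real^'d) \<times> real \<Rightarrow> real" where
  "Kl theta thy z z' = exp (- (snd z - snd z')\<^sup>2 / thy) * sqexp theta (fst z) (fst z')"

text \<open>Gram matrix K_l with entries K_l((X_i, w_i), (X_k, w_k)), where X_i are the
  level-l design points and w_i = y[l-1]_i the previous-level outputs.\<close>
definition gramL :: "real^'d \<Rightarrow> real \<Rightarrow> ('n \<Rightarrow> real^'d) \<Rightarrow> real^'n \<Rightarrow> real^'n^'n" where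
  "gramL theta thy X w = (\<chi> i k. Kl theta thy (X i, w$i) (X k, w$k))"

definition kvecL :: "real^'d \<Rightarrow> real \<Rightarrow> ('n \<Rightarrow> real^'d) \<Rightarrow> real^'n \<Rightarrow> real^'d \<Rightarrow> real \<Rightarrow> real^'n" where
  "kvecL theta thy X w x u = (\<chi> i. Kl theta thy (x, u) (X i, w$i))"

definition rvecL :: "real^'d \<Rightarrow> real \<Rightarrow> ('n \<Rightarrow> real^'d) \<Rightarrow> real^'n \<Rightarrow> real^'n \<Rightarrow> real \<Rightarrow> real^'n" where
  "rvecL theta thy X w y alpha = matrix_inv (gramL theta thy X w) *v (y - (\<chi> i. alpha))"

definition muL :: "real^'d \<Rightarrow> real \<Rightarrow> ('n \<Rightarrow> real^'d) \<Rightarrow> real^'n \<Rightarrow> real^'n \<Rightarrow> real \<Rightarrow> real^'d \<Rightarrow> real \<Rightarrow> real" where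
  "muL theta thy X w y alpha x u =
     alpha + (\<Sum>i\<in>UNIV. kvecL theta thy X w x u $ i * rvecL theta thy X w y alpha $ i)"

definition sig2L :: "real^'d \<Rightarrow> real \<Rightarrow> ('n \<Rightarrow> real^'d) \<Rightarrow> real^'n \<Rightarrow> real \<Rightarrow> real^'d \<Rightarrow> real \<Rightarrow> real" where
  "sig2L theta thy X w tau2 x u =
     tau2 * (1 - (\<Sum>i\<in>UNIV. kvecL theta thy X w x u $ i *
                   (matrix_inv (gramL theta thy X w) *v kvecL theta thy X w x u) $ i))"

end

theory Submission
  imports Defs
begin


definition psd :: "'i set \<Rightarrow> ('i \<Rightarrow> 'i \<Rightarrow> real) \<Rightarrow> bool" where
  "psd I Q \<longleftrightarrow> (\<forall>c. 0 \<le> (\<Sum>i\<in>I. \<Sum>k\<in>I. c i * c k * Q i k))"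

lemma psd_one: "psd I (\<lambda>_ _. 1)"
proof -
  have "(\<Sum>i\<in>I. \<Sum>k\<in>I. c i * c k * 1) = (\<Sum>i\<in>I. c i) * (\<Sum>i\<in>I. c i)" for c :: "_ \<Rightarrow> real"
    by (simp add: sum_product)
  then show ?thesis unfolding psd_def by simp
qed

lemma psd_gauss:
  assumes fin: "finite I" and th: "(\<theta>::real) > 0" and Q: "psd I Q"
  shows "psd I (\<lambda>i k. exp (-(a i - a k)\<^sup>2 / \<theta>) * Q i k)"
  unfolding psd_def
proof
  fix c :: "_ \<Rightarrow> real"
  define g where "g i = exp (- (a i)\<^sup>2 / \<theta>)" for i
  define b where "b n = (2/\<theta>)^n / fact n" for n :: nat
  define t where "t n i = c i * g i * a i ^ n" for n i
  have ex: "exp (-(a i - a k)\<^sup>2 / \<theta>) = g i * g k * exp (2 * a i * a k / \<theta>)" for i k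
    unfolding g_def using th by (simp add: exp_add[symmetric] power2_eq_square field_simps)
  have s1: "(\<lambda>n. b n * (t n i * t n k * Q i k)) sums (c i * c k * exp (-(a i - a k)\<^sup>2 / \<theta>) * Q i k)" for i k
  proof -
    have "(\<lambda>n. (2 * a i * a k / \<theta>)^n / fact n) sums exp (2 * a i * a k / \<theta>)"
      using exp_converges[of "2 * a i * a k / \<theta>"] by (simp add: divide_inverse_commute)
    then have "(\<lambda>n. (c i * g i * c k * g k * Q i k) * ((2 * a i * a k / \<theta>)^n / fact n)) sums
        ((c i * g i * c k * g k * Q i k) * exp (2 * a i * a k / \<theta>))"
      by (rule sums_mult)
    moreover have "(c i * g i * c k * g k * Q i k) * ((2 * a i * a k / \<theta>)^n / fact n)
       = b n * (t n i * t n k * Q i k)" for n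
      unfolding b_def t_def by (simp add: power_mult_distrib power_divide field_simps)
    ultimately show ?thesis using ex by (simp add: mult_ac)
  qed
  have S: "(\<lambda>n. \<Sum>i\<in>I. \<Sum>k\<in>I. b n * (t n i * t n k * Q i k)) sums
      (\<Sum>i\<in>I. \<Sum>k\<in>I. c i * c k * exp (-(a i - a k)\<^sup>2 / \<theta>) * Q i k)"
    by (intro sums_sum s1)
  have N: "0 \<le> (\<Sum>i\<in>I. \<Sum>k\<in>I. b n * (t n i * t n k * Q i k))" for n
  proof -
    have "(\<Sum>i\<in>I. \<Sum>k\<in>I. b n * (t n i * t n k * Q i k)) = b n * (\<Sum>i\<in>I. \<Sum>k\<in>I. t n i * t n k * Q i k)"
      by (simp add: sum_distrib_left)
    moreover have "0 \<le> b n" unfolding b_def using th by simp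
    moreover have "0 \<le> (\<Sum>i\<in>I. \<Sum>k\<in>I. t n i * t n k * Q i k)" using Q unfolding psd_def by blast
    ultimately show ?thesis by simp
  qed
  have "0 \<le> (\<Sum>i\<in>I. \<Sum>k\<in>I. c i * c k * exp (-(a i - a k)\<^sup>2 / \<theta>) * Q i k)"
    by (rule sums_le[OF _ sums_zero S]) (rule N)
  then show "0 \<le> (\<Sum>i\<in>I. \<Sum>k\<in>I. c i * c k * (exp (-(a i - a k)\<^sup>2 / \<theta>) * Q i k))"
    by (simp add: mult.assoc)
qed

lemma psd_prod:
  assumes fin: "finite I" and th: "\<forall>j. (\<theta> j::real) > 0" and J: "finite J"
  shows "psd I (\<lambda>i k. \<Prod>j\<in>J. exp (-(a i j - a k j)\<^sup>2 / \<theta> j))"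
  using J
proof (induction J rule: finite_induct)
  case empty
  then show ?case using psd_one by simp
next
  case (insert j J)
  have "psd I (\<lambda>i k. exp (-(a i j - a k j)\<^sup>2 / \<theta> j) * (\<Prod>j\<in>J. exp (-(a i j - a k j)\<^sup>2 / \<theta> j)))"
    by (rule psd_gauss[OF fin]) (use th insert in auto)
  then show ?case using insert by simp
qed

lemma psd_Kl:
  fixes p :: "'i \<Rightarrow> (real^'d::finite) \<times> real"
  assumes fin: "finite I" and th: "\<forall>j. theta$j > 0" and thy: "thy > 0"
  shows "psd I (\<lambda>i k. Kl theta thy (p i) (p k))"
proof -
  have "psd I (\<lambda>i k. \<Prod>j\<in>UNIV. exp (-((fst (p i))$j - (fst (p k))$j)\<^sup>2 / theta$j))"
    by (rule psd_prod[OF fin, where \<theta>="\<lambda>j. theta$j"]) (use th in auto)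
  then have "psd I (\<lambda>i k. exp (-(snd (p i) - snd (p k))\<^sup>2 / thy) *
      (\<Prod>j\<in>UNIV. exp (-((fst (p i))$j - (fst (p k))$j)\<^sup>2 / theta$j)))"
    by (rule psd_gauss[OF fin thy])
  then show ?thesis unfolding Kl_def sqexp_def by simp
qed

lemma sum_option: "(\<Sum>q\<in>(UNIV :: 'a::finite option set). f q) = f None + (\<Sum>i\<in>UNIV. f (Some i))"
proof -
  have "sum f (UNIV::'a option set) = sum f (insert None (range Some))" by (metis UNIV_option_conv)
  also have "\<dots> = f None + sum f (range Some)" by (rule sum.insert) auto
  also have "sum f (range Some) = (\<Sum>i\<in>UNIV. f (Some i))" by (simp add: sum.reindex)
  finally show ?thesis .
qed

lemma my_inv_right: "invertible A \<Longrightarrow> A ** matrix_inv A = mat 1"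
  unfolding invertible_def matrix_inv_def by (metis (mono_tags, lifting) someI_ex)

lemma Kl_sym: "Kl theta thy z z' = Kl theta thy z' z"
  unfolding Kl_def sqexp_def by (simp add: power2_commute)

lemma Kl_refl: "Kl theta thy z z = 1"
  unfolding Kl_def sqexp_def by simp

lemma sig2L_nonneg:
  fixes X :: "'n::finite \<Rightarrow> real^('d::finite)"
  assumes tau2: "tau2 > 0" and th: "\<forall>j. theta$j > 0" and thy: "thy > 0"
    and K_inv: "invertible (gramL theta thy X w)"
  shows "0 \<le> sig2L theta thy X w tau2 x u"
proof -
  define G where "G = gramL theta thy X w"
  define k where "k = kvecL theta thy X w x u"
  define v where "v = matrix_inv G *v k"
  define p :: "'n option \<Rightarrow> (real^'d) \<times> real" where
    "p q = (case q of None \<Rightarrow> (x, u) | Some i \<Rightarrow> (X i, w$i))" for q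
  define c :: "'n option \<Rightarrow> real" where "c q = (case q of None \<Rightarrow> -1 | Some i \<Rightarrow> v$i)" for q
  have "psd (UNIV :: 'n option set) (\<lambda>i k. Kl theta thy (p i) (p k))"
    by (rule psd_Kl[OF _ th thy]) simp
  then have Q: "0 \<le> (\<Sum>i\<in>UNIV. \<Sum>j\<in>UNIV. c i * c j * Kl theta thy (p i) (p j))"
    unfolding psd_def by blast
  have Gv: "(\<Sum>j\<in>UNIV. G$i$j * v$j) = k$i" for i
  proof -
    have "G *v v = k" unfolding v_def
      by (simp add: matrix_vector_mul_assoc my_inv_right[OF K_inv[folded G_def]])
    then have "(G *v v)$i = k$i" by simp
    then show ?thesis by (simp add: matrix_vector_mult_def)
  qed
  have kk: "Kl theta thy (x, u) (X j, w$j) = k$j" for j unfolding k_def kvecL_def by simp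
  have kk2: "Kl theta thy (X j, w$j) (x, u) = k$j" for j using kk[of j] Kl_sym by metis
  have GG: "Kl theta thy (X i, w$i) (X j, w$j) = G$i$j" for i j unfolding G_def gramL_def by simp
  have "(\<Sum>i\<in>UNIV. \<Sum>j\<in>UNIV. c i * c j * Kl theta thy (p i) (p j))
     = 1 - (\<Sum>j\<in>UNIV. v$j * k$j) - (\<Sum>j\<in>UNIV. v$j * k$j) + (\<Sum>i\<in>UNIV. \<Sum>j\<in>UNIV. v$i * (v$j * G$i$j))"
    by (simp add: sum_option c_def p_def Kl_refl kk kk2 GG sum.distrib sum_negf sum_subtractf mult.assoc mult.left_commute[of "G$_$_"])
  also have "\<dots> = 1 - (\<Sum>j\<in>UNIV. v$j * k$j) - (\<Sum>j\<in>UNIV. v$j * k$j) + (\<Sum>i\<in>UNIV. v$i * (\<Sum>j\<in>UNIV. G$i$j * v$j))"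
    by (simp add: sum_distrib_left mult.commute)
  also have "\<dots> = 1 - (\<Sum>j\<in>UNIV. v$j * k$j)" by (simp only: Gv)
  also have "\<dots> = 1 - (\<Sum>j\<in>UNIV. k$j * v$j)" by (simp add: mult.commute)
  finally have "0 \<le> 1 - (\<Sum>j\<in>UNIV. k$j * v$j)" using Q by simp
  then show ?thesis unfolding sig2L_def using tau2
    by (simp add: k_def[symmetric] v_def G_def[symmetric])
qed




lemma nd_exp:
  assumes a: "a > 0"
  shows "exp (-(y)\<^sup>2/a) = sqrt (pi*a) * normal_density 0 (sqrt (a/2)) y"
proof -
  have h: "(sqrt (a/2))\<^sup>2 = a/2" using a by simp
  have "normal_density 0 (sqrt (a/2)) y = 1 / sqrt (pi * a) * exp (-y\<^sup>2/a)"
    unfolding normal_density_def h by simp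
  then show ?thesis using a by (simp add: field_simps)
qed

lemma conv_exp_nn:
  assumes a: "a > 0" and s: "\<sigma> > 0"
  shows "(\<integral>\<^sup>+u. ennreal (normal_density m \<sigma> u * exp (-(u-c)\<^sup>2/a)) \<partial>lborel)
     = ennreal (1 / sqrt (1 + 2*\<sigma>\<^sup>2/a) * exp (-(c-m)\<^sup>2/(a + 2*\<sigma>\<^sup>2)))"
proof -
  define \<tau> where "\<tau> = sqrt (a/2)"
  have tp: "\<tau> > 0" unfolding \<tau>_def using a by simp
  have t2: "\<tau>\<^sup>2 = a/2" unfolding \<tau>_def using a by simp
  define g where "g y = normal_density 0 \<tau> ((c-m) - y) * normal_density 0 \<sigma> y" for y
  have e: "normal_density m \<sigma> u * exp (-(u-c)\<^sup>2/a) = sqrt (pi*a) * g (-m + 1 * u)" for u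
  proof -
    have "exp (-(u-c)\<^sup>2/a) = exp (-((c-m) - (u-m))\<^sup>2/a)" by (simp add: power2_commute)
    also have "\<dots> = sqrt (pi*a) * normal_density 0 \<tau> ((c-m) - (u-m))"
      unfolding \<tau>_def by (rule nd_exp[OF a])
    finally show ?thesis unfolding g_def normal_density_def by (simp add: algebra_simps)
  qed
  have gnn: "0 \<le> g y" for y unfolding g_def by simp
  have gm[measurable]: "g \<in> borel_measurable borel" unfolding g_def by measurable
  have "(\<integral>\<^sup>+u. ennreal (normal_density m \<sigma> u * exp (-(u-c)\<^sup>2/a)) \<partial>lborel)
      = (\<integral>\<^sup>+u. ennreal (sqrt (pi*a)) * ennreal (g (-m + 1 * u)) \<partial>lborel)"
    by (rule nn_integral_cong, subst e, rule ennreal_mult) (use a in \<open>auto simp: gnn\<close>)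
  also have "\<dots> = ennreal (sqrt (pi*a)) * (\<integral>\<^sup>+u. ennreal (g (-m + 1 * u)) \<partial>lborel)"
    by (rule nn_integral_cmult) measurable
  also have "(\<integral>\<^sup>+u. ennreal (g (-m + 1 * u)) \<partial>lborel) = (\<integral>\<^sup>+y. ennreal (g y) \<partial>lborel)"
    using nn_integral_real_affine[of "\<lambda>y. ennreal (g y)" 1 "-m"] by simp
  also have "\<dots> = normal_density 0 (sqrt (\<tau>\<^sup>2 + \<sigma>\<^sup>2)) (c - m)"
    unfolding g_def using conv_normal_density_zero_mean[OF tp s] by metis
  also have "ennreal (sqrt (pi*a)) * ennreal (normal_density 0 (sqrt (\<tau>\<^sup>2 + \<sigma>\<^sup>2)) (c - m))
     = ennreal (sqrt (pi*a) * normal_density 0 (sqrt (\<tau>\<^sup>2 + \<sigma>\<^sup>2)) (c - m))"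
    by (rule ennreal_mult[symmetric]) (use a in auto)
  also have "sqrt (pi*a) * normal_density 0 (sqrt (\<tau>\<^sup>2 + \<sigma>\<^sup>2)) (c - m)
      = 1 / sqrt (1 + 2*\<sigma>\<^sup>2/a) * exp (-(c-m)\<^sup>2/(a + 2*\<sigma>\<^sup>2))"
  proof -
    have p: "(sqrt (\<tau>\<^sup>2 + \<sigma>\<^sup>2))\<^sup>2 = a/2 + \<sigma>\<^sup>2" using t2 by simp
    have q: "2 * pi * (a/2 + \<sigma>\<^sup>2) = pi * a * (1 + 2*\<sigma>\<^sup>2/a)" using a by (simp add: field_simps)
    have r: "2 * (a/2 + \<sigma>\<^sup>2) = a + 2*\<sigma>\<^sup>2" by simp
    have H: "sqrt (pi*a) * (1 / sqrt (pi * a * (1 + 2*\<sigma>\<^sup>2/a))) = 1 / sqrt (1 + 2*\<sigma>\<^sup>2/a)"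
      using a by (simp add: real_sqrt_mult)
    have "sqrt (pi*a) * normal_density 0 (sqrt (\<tau>\<^sup>2 + \<sigma>\<^sup>2)) (c - m) =
       (sqrt (pi*a) * (1 / sqrt (pi * a * (1 + 2*\<sigma>\<^sup>2/a)))) * exp (-(c-m)\<^sup>2/(a + 2*\<sigma>\<^sup>2))"
      unfolding normal_density_def p q r by simp
    then show ?thesis unfolding H .
  qed
  finally show ?thesis .
qed




lemma sets_gauss[simp, measurable_cong]: "sets (gauss m v) = sets borel"
  unfolding gauss_def by simp

lemma space_gauss[simp]: "space (gauss m v) = UNIV"
  using sets_eq_imp_space_eq[OF sets_gauss] by simp

lemma prob_gauss: "prob_space (gauss m v)"
  unfolding gauss_def by (simp add: prob_space_normal_density prob_space_return)

lemma gauss_exp_int: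
  assumes a: "a > 0" and s: "s2 \<ge> 0"
  shows "integrable (gauss m s2) (\<lambda>u. exp (-(u-c)\<^sup>2/a))"
    and "(\<integral>u. exp (-(u-c)\<^sup>2/a) \<partial>gauss m s2) = 1 / sqrt (1 + 2 * s2/a) * exp (-(c-m)\<^sup>2/(a + 2 * s2))"
proof -
  interpret prob_space "gauss m s2" by (rule prob_gauss)
  show I: "integrable (gauss m s2) (\<lambda>u. exp (-(u-c)\<^sup>2/a))"
    by (rule integrable_const_bound[where B=1]) (use a in auto)
  show "(\<integral>u. exp (-(u-c)\<^sup>2/a) \<partial>gauss m s2) = 1 / sqrt (1 + 2 * s2/a) * exp (-(c-m)\<^sup>2/(a + 2 * s2))"
  proof (cases "s2 > 0")
    case False
    then have "s2 = 0" using s by simp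
    then show ?thesis unfolding gauss_def
      by (simp add: integral_return power2_commute)
  next
    case True
    define \<sigma> where "\<sigma> = sqrt s2"
    have sp: "\<sigma> > 0" unfolding \<sigma>_def using True by simp
    have s2e: "s2 = \<sigma>\<^sup>2" unfolding \<sigma>_def using s by simp
    have G: "gauss m s2 = density lborel (normal_density m \<sigma>)" unfolding gauss_def \<sigma>_def using True by simp
    have int: "(\<integral>u. exp (-(u-c)\<^sup>2/a) \<partial>gauss m s2) = (\<integral>u. normal_density m \<sigma> u * exp (-(u-c)\<^sup>2/a) \<partial>lborel)"
      unfolding G by (subst integral_density) auto
    have I2: "integrable lborel (\<lambda>u. normal_density m \<sigma> u * exp (-(u-c)\<^sup>2/a))"
      using I unfolding G by (subst (asm) integrable_density) auto
    have "ennreal (\<integral>u. normal_density m \<sigma> u * exp (-(u-c)\<^sup>2/a) \<partial>lborel)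
       = (\<integral>\<^sup>+u. ennreal (normal_density m \<sigma> u * exp (-(u-c)\<^sup>2/a)) \<partial>lborel)"
      by (rule nn_integral_eq_integral[OF I2, symmetric]) auto
    also have "\<dots> = ennreal (1 / sqrt (1 + 2*\<sigma>\<^sup>2/a) * exp (-(c-m)\<^sup>2/(a + 2*\<sigma>\<^sup>2)))"
      by (rule conv_exp_nn[OF a sp])
    finally have "(\<integral>u. normal_density m \<sigma> u * exp (-(u-c)\<^sup>2/a) \<partial>lborel)
        = 1 / sqrt (1 + 2*\<sigma>\<^sup>2/a) * exp (-(c-m)\<^sup>2/(a + 2*\<sigma>\<^sup>2))"
      by (subst (asm) ennreal_inj) (use a in \<open>auto intro!: integral_nonneg_AE divide_nonneg_nonneg add_nonneg_nonneg simp: add_pos_nonneg\<close>)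
    then show ?thesis using int s2e by simp
  qed
qed




abbreviation "SN \<equiv> density lborel (normal_density 0 1)"

lemma SN_prob: "prob_space SN" by (rule prob_space_normal_density) simp

lemma sets_SN[simp, measurable_cong]: "sets SN = sets borel" by simp

lemma gauss_distr: "gauss \<mu> v = distr SN borel (\<lambda>z. \<mu> + sqrt (max v 0) * z)"
proof (cases "v > 0")
  case False
  interpret prob_space SN by (rule SN_prob)
  have "max v 0 = 0" using False by simp
  then show ?thesis using False unfolding gauss_def by simp
next
  case True
  interpret prob_space SN by (rule SN_prob)
  define \<sigma> where "\<sigma> = sqrt v"
  have sp: "\<sigma> > 0" unfolding \<sigma>_def using True by simp
  have "distributed SN lborel (\<lambda>x. x) (normal_density 0 1)"
    unfolding distributed_def by (simp add: distr_id2)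
  from normal_density_affine[OF this _ sp[THEN less_imp_neq, symmetric], of \<mu>]
  have "distributed SN lborel (\<lambda>x. \<mu> + \<sigma> * x) (normal_density \<mu> \<sigma>)"
    using sp by simp
  then have D: "distr SN lborel (\<lambda>x. \<mu> + \<sigma> * x) = density lborel (normal_density \<mu> \<sigma>)"
    unfolding distributed_def by simp
  have "distr SN borel (\<lambda>x. \<mu> + \<sigma> * x) = distr SN lborel (\<lambda>x. \<mu> + \<sigma> * x)"
    by (rule measure_eqI) (simp_all add: emeasure_distr)
  then show ?thesis using True D unfolding gauss_def \<sigma>_def by simp
qed

lemma SN_space: "SN \<in> space (subprob_algebra borel)"
  using SN_prob by (simp add: space_subprob_algebra prob_space_imp_subprob_space)

lemma bind_distr_pair:
  fixes h :: "'a \<Rightarrow> real \<Rightarrow> real"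
  assumes P: "prob_space P" and h[measurable]: "case_prod h \<in> measurable (P \<Otimes>\<^sub>M SN) borel"
    and K: "(\<lambda>u. distr SN borel (h u)) \<in> measurable P (subprob_algebra borel)"
  shows "P \<bind> (\<lambda>u. distr SN borel (h u)) = distr (P \<Otimes>\<^sub>M SN) borel (case_prod h)"
proof -
  interpret P: prob_space P by (rule P)
  interpret S: prob_space SN by (rule SN_prob)
  have ne: "space P \<noteq> {}" by (rule P.not_empty)
  show ?thesis
  proof (rule measure_eqI)
    show "sets (P \<bind> (\<lambda>u. distr SN borel (h u))) = sets (distr (P \<Otimes>\<^sub>M SN) borel (case_prod h))"
      using ne by simp
  next
    fix A assume "A \<in> sets (P \<bind> (\<lambda>u. distr SN borel (h u)))"
    then have A[measurable]: "A \<in> sets borel" using ne by simp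
    have "emeasure (P \<bind> (\<lambda>u. distr SN borel (h u))) A = (\<integral>\<^sup>+u. emeasure (distr SN borel (h u)) A \<partial>P)"
      by (rule emeasure_bind[OF ne K A])
    also have "\<dots> = (\<integral>\<^sup>+u. emeasure SN (Pair u -` (case_prod h -` A \<inter> space (P \<Otimes>\<^sub>M SN))) \<partial>P)"
    proof (rule nn_integral_cong)
      fix u assume u: "u \<in> space P"
      have hu: "h u \<in> measurable SN borel" using measurable_compose_Pair1[OF u h] by simp
      have "Pair u -` (case_prod h -` A \<inter> space (P \<Otimes>\<^sub>M SN)) = h u -` A \<inter> space SN"
        using u by (auto simp: space_pair_measure)
      then show "emeasure (distr SN borel (h u)) A = emeasure SN (Pair u -` (case_prod h -` A \<inter> space (P \<Otimes>\<^sub>M SN)))"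
        using hu by (simp add: emeasure_distr)
    qed
    also have "\<dots> = emeasure (P \<Otimes>\<^sub>M SN) (case_prod h -` A \<inter> space (P \<Otimes>\<^sub>M SN))"
      by (rule S.emeasure_pair_measure_alt[symmetric]) measurable
    also have "\<dots> = emeasure (distr (P \<Otimes>\<^sub>M SN) borel (case_prod h)) A"
      by (simp add: emeasure_distr)
    finally show "emeasure (P \<bind> (\<lambda>u. distr SN borel (h u))) A = emeasure (distr (P \<Otimes>\<^sub>M SN) borel (case_prod h)) A" .
  qed
qed

lemma kernel_meas:
  assumes f[measurable]: "f \<in> borel_measurable borel" and g[measurable]: "g \<in> borel_measurable borel"
  shows "(\<lambda>u. distr SN borel (\<lambda>z. f u + g u * z)) \<in> measurable borel (subprob_algebra borel)"
proof -
  have "(\<lambda>u. distr ((\<lambda>_. SN) u) borel (\<lambda>z. f u + g u * z)) \<in> measurable borel (subprob_algebra borel)"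
    by (rule measurable_distr2[where M=borel]) (simp_all add: measurable_const[OF SN_space])
  then show ?thesis by simp
qed




lemma SN_mom:
  shows "integrable SN (\<lambda>z. z)" "integrable SN (\<lambda>z. z\<^sup>2)"
    "(\<integral>z. z \<partial>SN) = 0" "(\<integral>z. z\<^sup>2 \<partial>SN) = 1"
proof -
  show "integrable SN (\<lambda>z. z)"
    using integrable_std_normal_moment[of 1] by (subst integrable_density) auto
  show "integrable SN (\<lambda>z. z\<^sup>2)"
    using integrable_std_normal_moment[of 2] by (subst integrable_density) auto
  show "(\<integral>z. z \<partial>SN) = 0"
    using integral_std_normal_moment_odd[of 0] by (subst integral_density) auto
  show "(\<integral>z. z\<^sup>2 \<partial>SN) = 1"
    using integral_std_normal_moment_even[of 1] by (subst integral_density) auto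
qed

lemma SN_affine:
  shows "integrable SN (\<lambda>z. a + b * z)" "integrable SN (\<lambda>z. (a + b * z)\<^sup>2)"
    "(\<integral>z. a + b * z \<partial>SN) = a" "(\<integral>z. (a + b * z)\<^sup>2 \<partial>SN) = a\<^sup>2 + b\<^sup>2"
proof -
  interpret prob_space SN by (rule SN_prob)
  have e: "(a + b * z)\<^sup>2 = a\<^sup>2 + (2*a*b) * z + b\<^sup>2 * z\<^sup>2" for z by (simp add: power2_eq_square algebra_simps)
  have ps: "prob UNIV = 1" using prob_space by simp
  note m = SN_mom ps
  show "integrable SN (\<lambda>z. a + b * z)" using m by auto
  show "integrable SN (\<lambda>z. (a + b * z)\<^sup>2)" unfolding e using m by auto
  show "(\<integral>z. a + b * z \<partial>SN) = a" using m by simp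
  show "(\<integral>z. (a + b * z)\<^sup>2 \<partial>SN) = a\<^sup>2 + b\<^sup>2" unfolding e using m by simp
qed

lemma var_expand:
  assumes "prob_space M" "integrable M (\<lambda>z::real. z)" "integrable M (\<lambda>z. z\<^sup>2)"
  shows "(\<integral>z. (z - c)\<^sup>2 \<partial>M) = (\<integral>z. z\<^sup>2 \<partial>M) - 2 * c * (\<integral>z. z \<partial>M) + c\<^sup>2"
proof -
  interpret prob_space M by fact
  have e: "(z - c)\<^sup>2 = z\<^sup>2 - (2*c) * z + c\<^sup>2" for z by (simp add: power2_eq_square algebra_simps)
  show ?thesis unfolding e using assms prob_space by simp
qed




lemma bind_moments:
  fixes mu sg :: "real \<Rightarrow> real" and m s2 :: real
  assumes mu[measurable]: "mu \<in> borel_measurable borel" and sg[measurable]: "sg \<in> borel_measurable borel"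
    and sg0: "\<And>u. sg u \<ge> 0" and bmu: "\<And>u. \<bar>mu u\<bar> \<le> B1" and bsg: "\<And>u. sg u \<le> B2"
  defines "N \<equiv> gauss m s2 \<bind> (\<lambda>u. gauss (mu u) (sg u))"
  shows "prob_space N" "integrable N (\<lambda>z. z)" "integrable N (\<lambda>z. z\<^sup>2)"
    "(\<integral>z. z \<partial>N) = (\<integral>u. mu u \<partial>gauss m s2)"
    "(\<integral>z. z\<^sup>2 \<partial>N) = (\<integral>u. (mu u)\<^sup>2 + sg u \<partial>gauss m s2)"
proof -
  define P where "P = gauss m s2"
  interpret P: prob_space P unfolding P_def by (rule prob_gauss)
  interpret S: prob_space SN by (rule SN_prob)
  interpret Q: pair_prob_space P SN ..
  have sP[measurable_cong]: "sets P = sets borel" unfolding P_def by simp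
  define sd where "sd u = sqrt (max (sg u) 0)" for u
  have sd[measurable]: "sd \<in> borel_measurable borel" unfolding sd_def by measurable
  have sd2: "(sd u)\<^sup>2 = sg u" for u unfolding sd_def using sg0[of u] by simp
  define H where "H = (\<lambda>(u, z). mu u + sd u * z)"
  have Hm[measurable]: "H \<in> borel_measurable (P \<Otimes>\<^sub>M SN)" unfolding H_def by measurable
  have K: "(\<lambda>u. distr SN borel (\<lambda>z. mu u + sd u * z)) \<in> measurable P (subprob_algebra borel)"
    using kernel_meas[OF mu sd] by (simp add: measurable_cong_sets[OF sP refl])
  have "N = P \<bind> (\<lambda>u. distr SN borel (\<lambda>z. mu u + sd u * z))"
    unfolding N_def P_def sd_def by (simp add: gauss_distr)
  also have "\<dots> = distr (P \<Otimes>\<^sub>M SN) borel H"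
    unfolding H_def by (rule bind_distr_pair[OF P.prob_space_axioms _ K]) measurable
  finally have NQ: "N = distr (P \<Otimes>\<^sub>M SN) borel H" .
  have Hsq[measurable]: "(\<lambda>x. (H x)\<^sup>2) \<in> borel_measurable (P \<Otimes>\<^sub>M SN)" by measurable
  have inner: "(\<integral>z. norm ((H (u, z))\<^sup>2) \<partial>SN) = (mu u)\<^sup>2 + sg u" for u
  proof -
    have "(\<lambda>z. norm ((H (u, z))\<^sup>2)) = (\<lambda>z. (mu u + sd u * z)\<^sup>2)"
      unfolding H_def by (simp only: prod.case real_norm_def abs_power2)
    then show ?thesis by (simp only: SN_affine(4) sd2)
  qed
  have bint: "integrable P (\<lambda>u. (mu u)\<^sup>2 + sg u)"
  proof (rule P.integrable_const_bound[where B="B1\<^sup>2 + B2"])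
    show "AE u in P. norm ((mu u)\<^sup>2 + sg u) \<le> B1\<^sup>2 + B2"
    proof (rule AE_I2)
      fix u
      have "(mu u)\<^sup>2 \<le> B1\<^sup>2" using power_mono[OF bmu[of u] abs_ge_zero, of 2] by simp
      then show "norm ((mu u)\<^sup>2 + sg u) \<le> B1\<^sup>2 + B2" using sg0[of u] bsg[of u] by simp
    qed
  qed measurable
  have Isq: "integrable (P \<Otimes>\<^sub>M SN) (\<lambda>x. (H x)\<^sup>2)"
  proof -
    have i1: "integrable P (\<lambda>u. \<integral>z. norm ((H (u,z))\<^sup>2) \<partial>SN)" unfolding inner by (rule bint)
    have i2: "AE u in P. integrable SN (\<lambda>z. (H (u,z))\<^sup>2)"
      by (rule AE_I2) (simp only: H_def prod.case SN_affine)
    show ?thesis by (rule Q.Fubini_integrable[OF Hsq i1 i2])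
  qed
  have I1: "integrable (P \<Otimes>\<^sub>M SN) H"
    by (rule Q.square_integrable_imp_integrable[OF Hm Isq])
  have idm: "(\<lambda>z::real. z) \<in> borel_measurable borel" by simp
  have sqm: "(\<lambda>z::real. z\<^sup>2) \<in> borel_measurable borel" by simp
  show "prob_space N" unfolding NQ
    by (rule prob_space.prob_space_distr[OF prob_space_pair[OF P.prob_space_axioms S.prob_space_axioms]]) simp
  show "integrable N (\<lambda>z. z)" unfolding NQ integrable_distr_eq[OF Hm idm] by (rule I1)
  show "integrable N (\<lambda>z. z\<^sup>2)" unfolding NQ integrable_distr_eq[OF Hm sqm] by (rule Isq)
  have "(\<integral>z. z \<partial>N) = integral\<^sup>L (P \<Otimes>\<^sub>M SN) H" unfolding NQ by (rule integral_distr[OF Hm]) simp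
  also have "\<dots> = (\<integral>u. (\<integral>z. H (u, z) \<partial>SN) \<partial>P)" by (rule Q.integral_fst'[OF I1, symmetric])
  also have "\<dots> = (\<integral>u. mu u \<partial>P)" by (simp add: H_def SN_affine)
  finally show "(\<integral>z. z \<partial>N) = (\<integral>u. mu u \<partial>gauss m s2)" unfolding P_def .
  have "(\<integral>z. z\<^sup>2 \<partial>N) = integral\<^sup>L (P \<Otimes>\<^sub>M SN) (\<lambda>x. (H x)\<^sup>2)" unfolding NQ by (rule integral_distr[OF Hm]) simp
  also have "\<dots> = (\<integral>u. (\<integral>z. (H (u, z))\<^sup>2 \<partial>SN) \<partial>P)" by (rule Q.integral_fst'[OF Isq, symmetric])
  also have "\<dots> = (\<integral>u. (mu u)\<^sup>2 + sg u \<partial>P)" by (simp add: H_def SN_affine sd2)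
  finally show "(\<integral>z. z\<^sup>2 \<partial>N) = (\<integral>u. (mu u)\<^sup>2 + sg u \<partial>gauss m s2)" unfolding P_def .
qed




lemma exp_neg_le1: "t \<ge> 0 \<Longrightarrow> \<theta> > 0 \<Longrightarrow> exp (- t / \<theta>) \<le> (1::real)"
  by simp

lemma sqexp_bounds:
  assumes "\<forall>j. theta$j > 0"
  shows "0 \<le> sqexp theta x x'" "sqexp theta x x' \<le> 1"
proof -
  show "0 \<le> sqexp theta x x'" unfolding sqexp_def by (simp add: prod_nonneg)
  show "sqexp theta x x' \<le> 1" unfolding sqexp_def
    by (rule prod_le_1) (use assms in \<open>auto simp: divide_nonneg_pos\<close>)
qed

lemma exp_pair:
  fixes t u a b :: real
  assumes t: "t > 0"
  shows "exp (-(u - a)\<^sup>2/t) * exp (-(u - b)\<^sup>2/t) =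
         exp (-(a - b)\<^sup>2/(2*t)) * exp (-(u - (a+b)/2)\<^sup>2/(t/2))"
proof -
  have "-(u - a)\<^sup>2/t + -(u - b)\<^sup>2/t = -(a - b)\<^sup>2/(2*t) + -(u - (a+b)/2)\<^sup>2/(t/2)"
    using t by (simp add: field_simps power2_eq_square)
  then show ?thesis by (simp add: exp_add[symmetric])
qed

theorem proposition3p1:
  fixes alpha tau2 thy m s2 :: real
    and theta x :: "real^'d"
    and X :: "'n::finite \<Rightarrow> real^('d::finite)"
    and w y :: "real^'n"
  assumes tau2_pos: "tau2 > 0"
    and theta_pos: "\<forall>j. theta$j > 0"
    and thy_pos: "thy > 0"
    and K_inv: "invertible (gramL theta thy X w)"
    and s2_nonneg: "s2 \<ge> 0"
  defines "N \<equiv> gauss m s2 \<bind>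
                 (\<lambda>u. gauss (muL theta thy X w y alpha x u) (sig2L theta thy X w tau2 x u))"
    and "r \<equiv> rvecL theta thy X w y alpha"
    and "Kinv \<equiv> matrix_inv (gramL theta thy X w)"
  defines "mustar \<equiv> alpha + (\<Sum>i\<in>UNIV. r$i * (\<Prod>j\<in>UNIV. exp (- (x$j - X i $ j)\<^sup>2 / theta$j))
                       * (1 / sqrt (1 + 2 * s2 / thy)) * exp (- (w$i - m)\<^sup>2 / (thy + 2 * s2)))"
    and "zeta \<equiv> (\<lambda>i k. (1 / sqrt (1 + 4 * s2 / thy)) *
                   exp (- ((w$i + w$k) / 2 - m)\<^sup>2 / (thy / 2 + 2 * s2) - (w$i - w$k)\<^sup>2 / (2 * thy)))"
  shows "integrable N (\<lambda>z. z) \<and> integrable N (\<lambda>z. z\<^sup>2)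
         \<and> (\<integral>z. z \<partial>N) = mustar
         \<and> (\<integral>z. (z - (\<integral>z'. z' \<partial>N))\<^sup>2 \<partial>N) =
             tau2 - (mustar - alpha)\<^sup>2
             + (\<Sum>i\<in>UNIV. \<Sum>k\<in>UNIV. zeta i k * (r$i * r$k - tau2 * Kinv$i$k)
                 * (\<Prod>j\<in>UNIV. exp (- ((x$j - X i $ j)\<^sup>2 + (x$j - X k $ j)\<^sup>2) / theta$j)))"
proof -
  define E where "E i = sqexp theta x (X i)" for i
  define kk where "kk u i = exp (-(u - w$i)\<^sup>2/thy) * E i" for u i
  define mu where "mu u = muL theta thy X w y alpha x u" for u
  define sg where "sg u = sig2L theta thy X w tau2 x u" for u
  have mu_eq: "mu u = alpha + (\<Sum>i\<in>UNIV. kk u i * r$i)" for u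
    unfolding mu_def muL_def kvecL_def Kl_def kk_def E_def r_def by simp
  have sg_eq: "sg u = tau2 * (1 - (\<Sum>i\<in>UNIV. \<Sum>j\<in>UNIV. kk u i * Kinv$i$j * kk u j))" for u
    unfolding sg_def sig2L_def kvecL_def Kl_def kk_def E_def Kinv_def
    by (simp add: matrix_vector_mult_def sum_distrib_left mult.assoc)
  have E01: "0 \<le> E i" "E i \<le> 1" for i unfolding E_def using sqexp_bounds[OF theta_pos] by auto
  have kk01: "0 \<le> kk u i" "kk u i \<le> 1" for u i
  proof -
    have "exp (-(u - w$i)\<^sup>2/thy) \<le> 1" using thy_pos by (simp add: divide_nonneg_pos)
    then show "0 \<le> kk u i" "kk u i \<le> 1" unfolding kk_def using E01[of i]
      by (auto intro: mult_le_one)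
  qed
  have kkm[measurable]: "(\<lambda>u. kk u i) \<in> borel_measurable borel" for i unfolding kk_def by measurable
  have mum[measurable]: "mu \<in> borel_measurable borel" unfolding mu_eq[abs_def] by measurable
  have sgm[measurable]: "sg \<in> borel_measurable borel" unfolding sg_eq[abs_def] by measurable
  have sg0: "sg u \<ge> 0" for u unfolding sg_def by (rule sig2L_nonneg[OF tau2_pos theta_pos thy_pos K_inv])
  have bmu: "\<bar>mu u\<bar> \<le> \<bar>alpha\<bar> + (\<Sum>i\<in>UNIV. \<bar>r$i\<bar>)" for u
  proof -
    have "\<bar>\<Sum>i\<in>UNIV. kk u i * r$i\<bar> \<le> (\<Sum>i\<in>UNIV. \<bar>kk u i * r$i\<bar>)" by (rule sum_abs)
    also have "\<dots> \<le> (\<Sum>i\<in>UNIV. \<bar>r$i\<bar>)"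
      by (rule sum_mono) (use kk01 in \<open>auto simp: abs_mult intro: mult_left_le_one_le\<close>)
    finally show ?thesis unfolding mu_eq by linarith
  qed
  have bsg: "sg u \<le> tau2 * (1 + (\<Sum>i\<in>UNIV. \<Sum>j\<in>UNIV. \<bar>Kinv$i$j\<bar>))" for u
  proof -
    have "\<bar>\<Sum>i\<in>UNIV. \<Sum>j\<in>UNIV. kk u i * Kinv$i$j * kk u j\<bar> \<le> (\<Sum>i\<in>UNIV. \<Sum>j\<in>UNIV. \<bar>kk u i * Kinv$i$j * kk u j\<bar>)"
      by (rule order_trans[OF sum_abs sum_mono[OF sum_abs]])
    also have "\<dots> \<le> (\<Sum>i\<in>UNIV. \<Sum>j\<in>UNIV. \<bar>Kinv$i$j\<bar>)"
    proof (intro sum_mono)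
      fix i j
      have "\<bar>kk u i * Kinv$i$j * kk u j\<bar> = \<bar>Kinv$i$j\<bar> * (kk u i * kk u j)"
        using kk01 by (simp add: abs_mult)
      also have "\<dots> \<le> \<bar>Kinv$i$j\<bar> * 1"
        by (rule mult_left_mono) (use kk01 in \<open>auto intro: mult_le_one\<close>)
      finally show "\<bar>kk u i * Kinv$i$j * kk u j\<bar> \<le> \<bar>Kinv$i$j\<bar>" by simp
    qed
    finally show ?thesis unfolding sg_eq using tau2_pos
      by (intro mult_left_mono) auto
  qed
  have NN: "N = gauss m s2 \<bind> (\<lambda>u. gauss (mu u) (sg u))" unfolding N_def mu_def sg_def ..
  note BM = bind_moments[OF mum sgm sg0 bmu bsg, of m s2, folded NN]
  interpret P: prob_space "gauss m s2" by (rule prob_gauss)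
  have Pps: "P.prob UNIV = 1" using P.prob_space by simp
  have Pint: "integrable (gauss m s2) f" if "f \<in> borel_measurable borel" "\<And>u. \<bar>f u\<bar> \<le> B" for f :: "real \<Rightarrow> real" and B
    by (rule P.integrable_const_bound[where B=B]) (use that in auto)
  define gi where "gi c a = 1 / sqrt (1 + 2 * s2/a) * exp (-(c-m)\<^sup>2/(a + 2 * s2))" for c a
  have Iint: "(\<integral>u. kk u i \<partial>gauss m s2) = E i * gi (w$i) thy" for i
  proof -
    have "(\<integral>u. kk u i \<partial>gauss m s2) = (\<integral>u. exp (-(u - w$i)\<^sup>2/thy) \<partial>gauss m s2) * E i"
      unfolding kk_def by simp
    then show ?thesis unfolding gi_def using gauss_exp_int(2)[OF thy_pos s2_nonneg] by simp
  qed
  define PP where "PP i k = (\<Prod>j\<in>UNIV. exp (- ((x$j - X i $ j)\<^sup>2 + (x$j - X k $ j)\<^sup>2) / theta$j))" for i k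
  have EE: "E i * E k = PP i k" for i k
    unfolding E_def PP_def sqexp_def
    by (simp add: prod.distrib[symmetric] exp_add[symmetric] add_divide_distrib diff_divide_distrib)
  have Jint: "(\<integral>u. kk u i * kk u k \<partial>gauss m s2) = zeta i k * PP i k" for i k
  proof -
    have e: "kk u i * kk u k = (exp (-(w$i - w$k)\<^sup>2/(2*thy)) * (E i * E k)) * exp (-(u - (w$i + w$k)/2)\<^sup>2/(thy/2))" for u
      unfolding kk_def using exp_pair[OF thy_pos, of u "w$i" "w$k"] by (simp add: algebra_simps)
    have "(\<integral>u. kk u i * kk u k \<partial>gauss m s2) = (exp (-(w$i - w$k)\<^sup>2/(2*thy)) * (E i * E k)) *
        (\<integral>u. exp (-(u - (w$i + w$k)/2)\<^sup>2/(thy/2)) \<partial>gauss m s2)"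
      unfolding e by simp
    also have "\<dots> = (exp (-(w$i - w$k)\<^sup>2/(2*thy)) * (E i * E k)) *
        (1 / sqrt (1 + 2 * s2/(thy/2)) * exp (-((w$i + w$k)/2 - m)\<^sup>2/(thy/2 + 2 * s2)))"
      using gauss_exp_int(2)[of "thy/2" s2 m "(w$i + w$k)/2"] thy_pos s2_nonneg by simp
    also have "\<dots> = zeta i k * PP i k"
    proof -
      have "2 * s2/(thy/2) = 4 * s2/thy" by simp
      then show ?thesis unfolding zeta_def EE
        by (simp add: exp_diff exp_minus field_simps)
    qed
    finally show ?thesis .
  qed
  have mustar_eq: "(\<integral>u. mu u \<partial>gauss m s2) = mustar"
  proof -
    have "(\<integral>u. mu u \<partial>gauss m s2) = alpha + (\<Sum>i\<in>UNIV. (\<integral>u. kk u i \<partial>gauss m s2) * r$i)"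
      unfolding mu_eq using kk01 by (simp add: Pint[of _ 1] Pps)
    also have "\<dots> = mustar"
      unfolding mustar_def Iint gi_def E_def sqexp_def by (simp add: mult_ac)
    finally show ?thesis .
  qed
  have g_eq: "(mu u)\<^sup>2 + sg u = alpha\<^sup>2 + 2 * alpha * (\<Sum>i\<in>UNIV. kk u i * r$i)
      + (\<Sum>i\<in>UNIV. \<Sum>k\<in>UNIV. (r$i * r$k - tau2 * Kinv$i$k) * (kk u i * kk u k)) + tau2" for u
  proof -
    have sq: "(\<Sum>i\<in>UNIV. kk u i * r$i)\<^sup>2 = (\<Sum>i\<in>UNIV. \<Sum>k\<in>UNIV. (r$i * r$k) * (kk u i * kk u k))"
      by (simp add: power2_eq_square sum_product mult_ac)
    have "(\<Sum>i\<in>UNIV. \<Sum>k\<in>UNIV. (r$i * r$k - tau2 * Kinv$i$k) * (kk u i * kk u k)) =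
       (\<Sum>i\<in>UNIV. \<Sum>k\<in>UNIV. (r$i * r$k) * (kk u i * kk u k)) - tau2 * (\<Sum>i\<in>UNIV. \<Sum>j\<in>UNIV. kk u i * Kinv$i$j * kk u j)"
    proof -
      have a: "(r$i * r$k - tau2 * Kinv$i$k) * (kk u i * kk u k) = (r$i * r$k) * (kk u i * kk u k) - tau2 * (kk u i * Kinv$i$k * kk u k)" for i k
        by (simp add: algebra_simps)
      show ?thesis by (simp only: a sum_subtractf sum_distrib_left)
    qed
    then show ?thesis unfolding mu_eq sg_eq power2_sum sq by (simp add: algebra_simps)
  qed
  have kkp: "\<bar>kk u i * kk u k\<bar> \<le> 1" for u i k using kk01 by (auto intro: mult_le_one)
  have sq_eq: "(\<integral>u. (mu u)\<^sup>2 + sg u \<partial>gauss m s2) = alpha\<^sup>2 + 2 * alpha * (mustar - alpha)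
      + (\<Sum>i\<in>UNIV. \<Sum>k\<in>UNIV. (r$i * r$k - tau2 * Kinv$i$k) * (zeta i k * PP i k)) + tau2"
  proof -
    have I1: "integrable (gauss m s2) (\<lambda>u. kk u i)" for i by (rule Pint[of _ 1]) (use kk01 in auto)
    have I2: "integrable (gauss m s2) (\<lambda>u. kk u i * kk u k)" for i k by (rule Pint[of _ 1]) (use kkp in auto)
    have "(\<integral>u. (mu u)\<^sup>2 + sg u \<partial>gauss m s2) = alpha\<^sup>2 + 2 * alpha * (\<Sum>i\<in>UNIV. (\<integral>u. kk u i \<partial>gauss m s2) * r$i)
      + (\<Sum>i\<in>UNIV. \<Sum>k\<in>UNIV. (r$i * r$k - tau2 * Kinv$i$k) * (\<integral>u. kk u i * kk u k \<partial>gauss m s2)) + tau2"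
      unfolding g_eq using I1 I2 by (simp add: Pps)
    also have "(\<Sum>i\<in>UNIV. (\<integral>u. kk u i \<partial>gauss m s2) * r$i) = mustar - alpha"
      using mustar_eq unfolding mu_eq using I1 by (simp add: Pps)
    finally show ?thesis unfolding Jint .
  qed
  have int1: "integrable N (\<lambda>z. z)" by (rule BM(2))
  have int2: "integrable N (\<lambda>z. z\<^sup>2)" by (rule BM(3))
  have m1: "(\<integral>z. z \<partial>N) = mustar" using BM(4) mustar_eq by simp
  have m2: "(\<integral>z. z\<^sup>2 \<partial>N) = alpha\<^sup>2 + 2 * alpha * (mustar - alpha)
      + (\<Sum>i\<in>UNIV. \<Sum>k\<in>UNIV. (r$i * r$k - tau2 * Kinv$i$k) * (zeta i k * PP i k)) + tau2"
    using BM(5) sq_eq by simp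
  have v: "(\<integral>z. (z - (\<integral>z'. z' \<partial>N))\<^sup>2 \<partial>N) = (\<integral>z. z\<^sup>2 \<partial>N) - 2 * mustar * mustar + mustar\<^sup>2"
    using var_expand[OF BM(1) int1 int2, of mustar] m1 by simp
  have fin: "(\<Sum>i\<in>UNIV. \<Sum>k\<in>UNIV. (r$i * r$k - tau2 * Kinv$i$k) * (zeta i k * PP i k)) =
     (\<Sum>i\<in>UNIV. \<Sum>k\<in>UNIV. zeta i k * (r$i * r$k - tau2 * Kinv$i$k)
                 * (\<Prod>j\<in>UNIV. exp (- ((x$j - X i $ j)\<^sup>2 + (x$j - X k $ j)\<^sup>2) / theta$j)))"
    unfolding PP_def by (simp add: mult_ac)
  have alg: "V = t - (M - a)\<^sup>2 + C" if "Z = a\<^sup>2 + 2 * a * (M - a) + C + t" "V = Z - 2 * M * M + M\<^sup>2"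
    for V t M a C Z :: real using that by (simp add: power2_eq_square algebra_simps)
  have "(\<integral>z. (z - (\<integral>z'. z' \<partial>N))\<^sup>2 \<partial>N) = tau2 - (mustar - alpha)\<^sup>2 +
      (\<Sum>i\<in>UNIV. \<Sum>k\<in>UNIV. (r$i * r$k - tau2 * Kinv$i$k) * (zeta i k * PP i k))"
    by (rule alg[OF m2 v])
  then show ?thesis using int1 int2 m1 fin by simp
qed


end
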